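(* Let $(V,E)$ be an almost-acyclic $k$-uniform hypergraph, let $t$ be the number of its connected components with at least two vertices, and let $r=|E|$. Then every $B\in\mathcal B(E)$ satisfies $\|\Sigma B\|_{\mathsf H}\ge\max\{2t,\tfrac45r\}$.
   Context: $N\ge2$, $\mathbb Z_N=\mathbb Z/N\mathbb Z$. A $k$-uniform hypergraph $(V,E)$ has finite vertex set $V$ and a set $E$ of edges, each an ordered $k$-tuple of distinct vertices. It is almost-acyclic if for every $\ell\ge0$, any $\ell$ distinct edges together cover at least $\ell(k-1.1)$ vertices. For $y\in\mathbb Z_N^V$, $\|y\|_{\mathsf H}=|\mathrm{supp}(y)|$ is the number of nonzero coordinates. $\mathcal B(E)$ is the set of maps $B:E\to\mathbb Z_N^V$ such that for each $e=(v_1,\dots,v_k)\in E$, $\mathrm{supp}(B(e))\subseteq\{v_1,\dots,v_k\}$ and $|\mathrm{supp}(B(e))|\ge3$; $\Sigma B=\sum_{e\in E}B(e)\in\mathbb Z_N^V$. *)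

theory Defs
  imports Complex_Main
begin

(* Elements of Z_N are represented by integers; an integer represents 0 in Z_N iff N divides it.
   A vector y in Z_N^V is a function 'v => int (only values on V matter). *)

definition zsupp :: "int \<Rightarrow> 'v set \<Rightarrow> ('v \<Rightarrow> int) \<Rightarrow> 'v set" where
  "zsupp N V y = {v \<in> V. \<not> N dvd y v}"

definition hnorm :: "int \<Rightarrow> 'v set \<Rightarrow> ('v \<Rightarrow> int) \<Rightarrow> nat" where
  "hnorm N V y = card (zsupp N V y)"

definition uniform_hypergraph :: "nat \<Rightarrow> 'v set \<Rightarrow> 'v list set \<Rightarrow> bool" where
  "uniform_hypergraph k V E \<longleftrightarrow> finite V \<and>
     (\<forall>e\<in>E. length e = k \<and> distinct e \<and> set e \<subseteq> V)"

definition almost_acyclic :: "nat \<Rightarrow> 'v list set \<Rightarrow> bool" where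
  "almost_acyclic k E \<longleftrightarrow>
     (\<forall>F. F \<subseteq> E \<and> finite F \<longrightarrow>
        real (card (\<Union>e\<in>F. set e)) \<ge> real (card F) * (real k - 11/10))"

definition hadj :: "'v set \<Rightarrow> 'v list set \<Rightarrow> ('v \<times> 'v) set" where
  "hadj V E = {(u, w). u \<in> V \<and> w \<in> V \<and> (\<exists>e\<in>E. u \<in> set e \<and> w \<in> set e)}"

definition hcomponents :: "'v set \<Rightarrow> 'v list set \<Rightarrow> 'v set set" where
  "hcomponents V E = (\<lambda>v. {w \<in> V. (v, w) \<in> (hadj V E)\<^sup>*}) ` V"

definition nontriv_components :: "'v set \<Rightarrow> 'v list set \<Rightarrow> nat" where
  "nontriv_components V E = card {C \<in> hcomponents V E. card C \<ge> 2}"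

definition admissible_B :: "int \<Rightarrow> 'v set \<Rightarrow> 'v list set \<Rightarrow> ('v list \<Rightarrow> 'v \<Rightarrow> int) \<Rightarrow> bool" where
  "admissible_B N V E B \<longleftrightarrow>
     (\<forall>e\<in>E. zsupp N V (B e) \<subseteq> set e \<and> card (zsupp N V (B e)) \<ge> 3)"

definition SigmaB :: "'v list set \<Rightarrow> ('v list \<Rightarrow> 'v \<Rightarrow> int) \<Rightarrow> 'v \<Rightarrow> int" where
  "SigmaB E B = (\<lambda>v. \<Sum>e\<in>E. B e v)"

end

theory Submission
  imports Defs
begin

lemma count_lemma:
  fixes F :: "'v list set" and s :: "'v list \<Rightarrow> 'v set"
  assumes fin: "finite F"
    and sub: "\<forall>e\<in>F. s e \<subseteq> set e" and c3: "\<forall>e\<in>F. card (s e) \<ge> 3"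
    and len: "\<forall>e\<in>F. length e = k \<and> distinct e"
  shows "int (card {v \<in> (\<Union>e\<in>F. set e). card {e\<in>F. v \<in> s e} = 1})
     \<ge> 3 * int (card F) - 2 * (int k * int (card F) - int (card (\<Union>e\<in>F. set e)))"
proof -
  define W where "W = (\<Union>e\<in>F. set e)"
  have finW: "finite W" using fin by (auto simp: W_def)
  define m where "m v = card {e\<in>F. v \<in> s e}" for v
  define M where "M v = card {e\<in>F. v \<in> set e}" for v
  have pt: "int (if m v = 1 then 1 else 0) \<ge> int (m v) - 2 * (int (M v) - 1)" if v: "v \<in> W" for v
  proof -
    obtain e where e: "e \<in> F" "v \<in> set e" using v by (auto simp: W_def)
    have "{e\<in>F. v \<in> set e} \<noteq> {}" using e by auto
    moreover have "finite {e\<in>F. v \<in> set e}" using fin by auto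
    ultimately have "1 \<le> M v" unfolding M_def by (simp add: Suc_le_eq card_gt_0_iff)
    moreover have "m v \<le> M v" unfolding m_def M_def
      by (rule card_mono) (use fin sub in auto)
    ultimately show ?thesis by auto
  qed
  have s1: "(\<Sum>v\<in>W. m v) = (\<Sum>e\<in>F. card (s e))"
    unfolding m_def
  proof (rule sum_multicount_gen[OF finW fin])
    show "\<forall>j\<in>F. card {i \<in> W. i \<in> s j} = card (s j)"
    proof
      fix j assume "j \<in> F"
      then have "{i \<in> W. i \<in> s j} = s j" using sub by (auto simp: W_def)
      then show "card {i \<in> W. i \<in> s j} = card (s j)" by simp
    qed
  qed
  have s2: "(\<Sum>v\<in>W. M v) = (\<Sum>e\<in>F. k)"
    unfolding M_def
  proof (rule sum_multicount_gen[OF finW fin])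
    show "\<forall>j\<in>F. card {i \<in> W. i \<in> set j} = k"
    proof
      fix j assume "j \<in> F"
      then have "{i \<in> W. i \<in> set j} = set j" by (auto simp: W_def)
      then show "card {i \<in> W. i \<in> set j} = k" using len \<open>j \<in> F\<close> distinct_card by fastforce
    qed
  qed
  have s3: "(\<Sum>e\<in>F. card (s e)) \<ge> (\<Sum>e\<in>F. 3)" by (rule sum_mono) (use c3 in auto)
  have cardU: "card {v \<in> W. m v = 1} = (\<Sum>v\<in>W. if m v = 1 then 1 else 0)"
    using sum.inter_filter[OF finW, of "\<lambda>_. (1::nat)" "\<lambda>v. m v = 1"] by simp
  have "int (card {v \<in> W. m v = 1}) = (\<Sum>v\<in>W. int (if m v = 1 then 1 else 0))"
    unfolding cardU by (simp add: of_nat_sum)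
  also have "\<dots> \<ge> (\<Sum>v\<in>W. int (m v) - 2 * (int (M v) - 1))"
    by (rule sum_mono) (use pt in auto)
  also have "(\<Sum>v\<in>W. int (m v) - 2 * (int (M v) - 1)) = int (\<Sum>v\<in>W. m v) - 2 * int (\<Sum>v\<in>W. M v) + 2 * int (card W)"
    by (simp add: sum_subtractf sum.distrib sum_distrib_left of_nat_sum algebra_simps)
  finally have "int (card {v \<in> W. m v = 1}) \<ge> int (\<Sum>v\<in>W. m v) - 2 * int (\<Sum>v\<in>W. M v) + 2 * int (card W)" .
  moreover have "int (\<Sum>v\<in>W. m v) \<ge> 3 * int (card F)"
  proof -
    have "(\<Sum>v\<in>W. m v) \<ge> 3 * card F" using s1 s3 by simp
    then show ?thesis by linarith
  qed
  moreover have "int (\<Sum>v\<in>W. M v) = int k * int (card F)" using s2 by simp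
  ultimately have "int (card {v \<in> W. m v = 1}) \<ge> 3 * int (card F) - 2 * (int k * int (card F) - int (card W))"
    by (smt (verit))
  then show ?thesis by (simp add: W_def m_def)
qed


lemma single_supp:
  assumes "v \<in> V" "e0 \<in> E" "finite E" "v \<in> zsupp N V (B e0)"
    and "\<forall>e\<in>E. v \<in> zsupp N V (B e) \<longrightarrow> e = e0"
  shows "v \<in> zsupp N V (SigmaB E B)"
proof -
  have "SigmaB E B v = B e0 v + (\<Sum>e\<in>E - {e0}. B e v)"
    unfolding SigmaB_def using assms(2,3) by (simp add: sum.remove)
  moreover have "N dvd (\<Sum>e\<in>E - {e0}. B e v)"
  proof (rule dvd_sum)
    fix e assume "e \<in> E - {e0}"
    then show "N dvd B e v" using assms(1,5) by (auto simp: zsupp_def)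
  qed
  moreover have "\<not> N dvd B e0 v" using assms(4) by (simp add: zsupp_def)
  ultimately have "\<not> N dvd SigmaB E B v" by (simp add: dvd_add_left_iff)
  then show ?thesis using assms(1) by (simp add: zsupp_def)
qed

lemma aux1:
  fixes x y r k w :: real
  assumes "x \<le> y" "3*r - 2*(k*r - w) \<le> x" "r*(k-11/10) \<le> w"
  shows "4/5*r \<le> y"
proof -
  have "k*r - 11/10*r \<le> w" using assms by (simp add: algebra_simps)
  then show ?thesis using assms by argo
qed

lemma aux2:
  fixes x r k w :: real
  assumes "3*r - 2*(k*r - w) \<le> x" "r*(k-11/10) \<le> w" "2 \<le> r"
  shows "1 < x"
proof -
  have "k*r - 11/10*r \<le> w" using assms by (simp add: algebra_simps)
  then show ?thesis using assms by argo
qed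

theorem lemma7p10:
  fixes N :: int and k :: nat and V :: "'v set" and E :: "'v list set"
    and B :: "'v list \<Rightarrow> 'v \<Rightarrow> int"
  assumes "N \<ge> 2"
    and "uniform_hypergraph k V E"
    and "almost_acyclic k E"
    and "admissible_B N V E B"
  shows "real (hnorm N V (SigmaB E B))
           \<ge> max (2 * real (nontriv_components V E)) (4/5 * real (card E))"
proof -
  define s where "s e = zsupp N V (B e)" for e
  define S where "S = zsupp N V (SigmaB E B)"
  define U1 where "U1 F = {v \<in> (\<Union>e\<in>F. set e). card {e\<in>F. v \<in> s e} = 1}" for F
  have finV: "finite V" and edges: "\<forall>e\<in>E. length e = k \<and> distinct e \<and> set e \<subseteq> V"
    using assms(2) by (auto simp: uniform_hypergraph_def)
  have adm: "\<forall>e\<in>E. s e \<subseteq> set e \<and> card (s e) \<ge> 3"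
    using assms(4) by (simp add: admissible_B_def s_def)
  have aa: "real (card (\<Union>e\<in>F. set e)) \<ge> real (card F) * (real k - 11/10)" if "F \<subseteq> E" "finite F" for F
    using assms(3) that by (simp add: almost_acyclic_def)
  have finE: "finite E"
  proof (rule finite_subset)
    show "E \<subseteq> {xs. set xs \<subseteq> V \<and> length xs = k}" using edges by auto
    show "finite {xs. set xs \<subseteq> V \<and> length xs = k}" using finV by (rule finite_lists_length_eq)
  qed
  have finS: "finite S" using finV by (simp add: S_def zsupp_def)
  have cnt: "int (card (U1 F)) \<ge> 3 * int (card F) - 2 * (int k * int (card F) - int (card (\<Union>e\<in>F. set e)))"
    if "F \<subseteq> E" for F
    unfolding U1_def
    by (rule count_lemma) (use that adm edges finE finite_subset in auto)
  have U1S: "U1 F \<subseteq> S" if FE: "F \<subseteq> E"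
     and cl: "\<forall>e\<in>E. \<forall>v\<in>set e. (\<exists>e'\<in>F. v \<in> set e') \<longrightarrow> e \<in> F" for F
  proof
    fix v assume v: "v \<in> U1 F"
    then obtain e0 where e0: "{e\<in>F. v \<in> s e} = {e0}"
      unfolding U1_def by (auto simp: card_1_singleton_iff)
    then have e0F: "e0 \<in> F" and ve0: "v \<in> s e0" by auto
    have vV: "v \<in> V" using v FE edges unfolding U1_def by blast
    show "v \<in> S" unfolding S_def
    proof (rule single_supp[OF vV _ finE])
      show "e0 \<in> E" using e0F FE by auto
      show "v \<in> zsupp N V (B e0)" using ve0 by (simp add: s_def)
      show "\<forall>e\<in>E. v \<in> zsupp N V (B e) \<longrightarrow> e = e0"
      proof (intro ballI impI)
        fix e assume eE: "e \<in> E" and "v \<in> zsupp N V (B e)"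
        then have ve: "v \<in> s e" by (simp add: s_def)
        then have "v \<in> set e" using adm eE by auto
        moreover have "v \<in> set e0" using ve0 adm e0F FE by auto
        ultimately have "e \<in> F" using cl eE e0F by blast
        then show "e = e0" using e0 ve by auto
      qed
    qed
  qed
  have b1: "real (card S) \<ge> 4/5 * real (card E)"
  proof -
    have "U1 E \<subseteq> S" by (rule U1S) auto
    then have "real (card (U1 E)) \<le> real (card S)" using finS by (simp add: card_mono)
    moreover have "int (card (U1 E)) \<ge> 3 * int (card E) - 2 * (int k * int (card E) - int (card (\<Union>e\<in>E. set e)))"
      using cnt by simp
    then have "real (card (U1 E)) \<ge> 3 * real (card E) - 2 * (real k * real (card E) - real (card (\<Union>e\<in>E. set e)))"
      by (metis (mono_tags, opaque_lifting) of_int_le_iff of_int_of_nat_eq of_int_diff of_int_mult of_int_numeral)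
    moreover have "real (card (\<Union>e\<in>E. set e)) \<ge> real (card E) * (real k - 11/10)"
      using aa finE by simp
    ultimately show ?thesis by (rule aux1)
  qed
  define R where "R = hadj V E"
  define comp where "comp a = {w \<in> V. (a, w) \<in> R\<^sup>*}" for a
  define T where "T = {C \<in> hcomponents V E. card C \<ge> 2}"
  define EC where "EC C = {e\<in>E. set e \<subseteq> C}" for C
  have symR: "sym (R\<^sup>*)" by (rule sym_rtrancl) (auto simp: sym_def R_def hadj_def)
  have compdisj: "comp a = comp b" if "x \<in> comp a" "x \<in> comp b" for a b x
  proof -
    have "(a, x) \<in> R\<^sup>*" "(b, x) \<in> R\<^sup>*" using that by (auto simp: comp_def)
    then have "(x, b) \<in> R\<^sup>*" using symR by (auto dest: symD)
    then have ab: "(a, b) \<in> R\<^sup>*" using \<open>(a, x) \<in> R\<^sup>*\<close> by auto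
    then have ba: "(b, a) \<in> R\<^sup>*" using symR by (auto dest: symD)
    show ?thesis unfolding comp_def using ab ba by (auto intro: rtrancl_trans)
  qed
  have closure: "w \<in> comp a" if "e \<in> E" "u \<in> set e" "u \<in> comp a" "w \<in> set e" for e u w a
  proof -
    have "(u, w) \<in> R" using that edges by (auto simp: R_def hadj_def)
    moreover have "(a, u) \<in> R\<^sup>*" using that by (auto simp: comp_def)
    ultimately have "(a, w) \<in> R\<^sup>*" by auto
    moreover have "w \<in> V" using that edges by auto
    ultimately show ?thesis by (simp add: comp_def)
  qed
  have hc: "hcomponents V E = comp ` V" by (simp add: hcomponents_def comp_def R_def)
  have finT: "finite T" using finV by (simp add: T_def hc)
  have CT: "U1 (EC C) \<subseteq> C \<and> U1 (EC C) \<subseteq> S \<and> card (U1 (EC C)) \<ge> 2" if CT: "C \<in> T" for C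
  proof -
    obtain a where aV: "a \<in> V" and Ca: "C = comp a" and c2: "card C \<ge> 2"
      using CT by (auto simp: T_def hc)
    have aC: "a \<in> C" using aV by (simp add: Ca comp_def)
    obtain w where wC: "w \<in> C" and wa: "w \<noteq> a"
    proof -
      have "C \<noteq> {a}" using c2 by auto
      then show ?thesis using aC that by blast
    qed
    have "(a, w) \<in> R\<^sup>*" using wC Ca comp_def by auto
    then obtain y where "(a, y) \<in> R" using wa by (auto elim: converse_rtranclE)
    then obtain e where eE: "e \<in> E" and ae: "a \<in> set e" by (auto simp: R_def hadj_def)
    have "set e \<subseteq> C" using closure[OF eE ae] aC Ca by auto
    then have eEC: "e \<in> EC C" using eE by (simp add: EC_def)
    have ECE: "EC C \<subseteq> E" by (auto simp: EC_def)
    have finEC: "finite (EC C)" using finE ECE finite_subset by blast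
    have sub1: "U1 (EC C) \<subseteq> C" by (auto simp: U1_def EC_def)
    have cl: "\<forall>e\<in>E. \<forall>v\<in>set e. (\<exists>e'\<in>EC C. v \<in> set e') \<longrightarrow> e \<in> EC C"
    proof (intro ballI impI)
      fix e v assume eE: "e \<in> E" and v: "v \<in> set e" and "\<exists>e'\<in>EC C. v \<in> set e'"
      then have "v \<in> C" by (auto simp: EC_def)
      then have "set e \<subseteq> C" using closure[OF eE v] Ca by auto
      then show "e \<in> EC C" using eE by (simp add: EC_def)
    qed
    have sub2: "U1 (EC C) \<subseteq> S" by (rule U1S[OF ECE cl])
    have c: "int (card (U1 (EC C))) \<ge> 3 * int (card (EC C)) - 2 * (int k * int (card (EC C)) - int (card (\<Union>e\<in>EC C. set e)))"
      using cnt[OF ECE] .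
    have r1: "card (EC C) \<ge> 1" using eEC finEC by (metis One_nat_def Suc_leI card_gt_0_iff empty_iff)
    have "card (U1 (EC C)) \<ge> 2"
    proof (cases "card (EC C) = 1")
      case True
      then obtain e1 where "EC C = {e1}" by (auto simp: card_1_singleton_iff)
      moreover have "card (set e1) = k" using edges ECE \<open>EC C = {e1}\<close> distinct_card by fastforce
      ultimately show ?thesis using c by simp
    next
      case False
      then have r2: "card (EC C) \<ge> 2" using r1 by simp
      have "real_of_int (int (card (U1 (EC C)))) \<ge> real_of_int (3 * int (card (EC C)) - 2 * (int k * int (card (EC C)) - int (card (\<Union>e\<in>EC C. set e))))"
        using c by linarith
      then have "real (card (U1 (EC C))) \<ge> 3 * real (card (EC C)) - 2 * (real k * real (card (EC C)) - real (card (\<Union>e\<in>EC C. set e)))"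
        by simp
      moreover have "real (card (\<Union>e\<in>EC C. set e)) \<ge> real (card (EC C)) * (real k - 11/10)"
        using aa[OF ECE finEC] .
      moreover have "real (card (EC C)) \<ge> 2" using r2 by simp
      ultimately have "real (card (U1 (EC C))) > 1" by (rule aux2)
      then show ?thesis by simp
    qed
    then show ?thesis using sub1 sub2 by simp
  qed
  have b2: "real (card S) \<ge> 2 * real (card T)"
  proof -
    have disj: "\<forall>C\<in>T. \<forall>C'\<in>T. C \<noteq> C' \<longrightarrow> U1 (EC C) \<inter> U1 (EC C') = {}"
    proof (intro ballI impI)
      fix C C' assume C: "C \<in> T" and C': "C' \<in> T" and ne: "C \<noteq> C'"
      obtain a b where "C = comp a" "C' = comp b" using C C' by (auto simp: T_def hc)
      then have "C \<inter> C' = {}" using compdisj ne by blast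
      then show "U1 (EC C) \<inter> U1 (EC C') = {}" using CT[OF C] CT[OF C'] by blast
    qed
    have finU: "\<forall>C\<in>T. finite (U1 (EC C))" using CT finS finite_subset by blast
    have "card (\<Union>C\<in>T. U1 (EC C)) = (\<Sum>C\<in>T. card (U1 (EC C)))"
      by (rule card_UN_disjoint[OF finT finU disj])
    moreover have "(\<Sum>C\<in>T. card (U1 (EC C))) \<ge> (\<Sum>C\<in>T. 2)" by (rule sum_mono) (use CT in auto)
    moreover have "card (\<Union>C\<in>T. U1 (EC C)) \<le> card S"
      by (rule card_mono[OF finS]) (use CT in auto)
    ultimately have "card S \<ge> 2 * card T" by simp
    then show ?thesis by simp
  qed
  have "nontriv_components V E = card T" by (simp add: nontriv_components_def T_def)
  moreover have "hnorm N V (SigmaB E B) = card S" by (simp add: hnorm_def S_def)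
  ultimately show ?thesis using b1 b2 by simp
qed

end
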